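(* Let $\mathcal{A}=\mathbb{C}\langle x,y,z\rangle/(x^2,y^2,z^2,xyz,yzx,zxy)$, graded by $\deg x=\deg y=\deg z=1$, and let $a_n=\dim\mathcal{A}_n$. Then $a_n=2a_{n-1}-a_{n-3}$ for all $n\ge 4$. *)

theory Defs
  imports Complex_Main "HOL-Library.Function_Algebras"
begin

text \<open>The free algebra C<x,y,z>: letters x,y,z are encoded as 0,1,2 and
  noncommutative monomials as words (nat lists) over these letters.\<close>

definition cscale :: "complex \<Rightarrow> ('a \<Rightarrow> complex) \<Rightarrow> ('a \<Rightarrow> complex)" where
  "cscale c f = (\<lambda>w. c * f w)"

lemma vector_space_cscale: "vector_space cscale"
  by unfold_locales (auto simp: cscale_def fun_eq_iff algebra_simps)

definition letters :: "nat set" where "letters = {0, 1, 2}"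

definition mon :: "nat list \<Rightarrow> (nat list \<Rightarrow> complex)" where
  "mon w = (\<lambda>u. if u = w then 1 else 0)"

definition words :: "nat \<Rightarrow> nat list set" where
  "words n = {w. length w = n \<and> set w \<subseteq> letters}"

definition rels :: "nat list set" where
  "rels = {[0,0], [1,1], [2,2], [0,1,2], [1,2,0], [2,0,1]}"

definition free_deg :: "nat \<Rightarrow> (nat list \<Rightarrow> complex) set" where
  "free_deg n = module.span cscale (mon ` words n)"

definition ideal_deg :: "nat \<Rightarrow> (nat list \<Rightarrow> complex) set" where
  "ideal_deg n = module.span cscale
     {mon (u @ r @ v) | u r v. r \<in> rels \<and> set u \<subseteq> letters \<and> set v \<subseteq> letters
                              \<and> length (u @ r @ v) = n}"

text \<open>a_n = dim A_n = dim (F_n / I_n) = dim F_n - dim I_n.\<close>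
definition a_dim :: "nat \<Rightarrow> nat" where
  "a_dim n = vector_space.dim cscale (free_deg n) - vector_space.dim cscale (ideal_deg n)"

end

theory Submission
  imports Defs
begin

lemma sum_fun_apply: "finite t \<Longrightarrow> (\<Sum>x\<in>t. f x) w = (\<Sum>x\<in>t. (f x w :: complex))"
  by (induction t rule: finite_induct) (auto simp: plus_fun_def zero_fun_def)

lemma mon_inj: "inj mon"
proof (rule injI)
  fix x y assume "mon x = mon y"
  then have "mon x x = mon y x" by simp
  then show "x = y" by (simp add: mon_def split: if_splits)
qed

lemma mon_app: "mon w' w = (if w = w' then 1 else 0)"
  by (simp add: mon_def)

lemma indep_mon: "\<not> module.dependent cscale (mon ` S)"
proof
  interpret vector_space cscale by (rule vector_space_cscale)
  assume "dependent (mon ` S)"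
  then have "\<exists>t u. finite t \<and> t \<subseteq> mon ` S \<and> (\<Sum>v\<in>t. cscale (u v) v) = 0 \<and> (\<exists>v\<in>t. u v \<noteq> 0)"
    by (simp only: dependent_explicit)
  then obtain t u where t: "finite t" "t \<subseteq> mon ` S" "(\<Sum>v\<in>t. cscale (u v) v) = 0"
    and ex: "\<exists>v\<in>t. u v \<noteq> 0"
    by (elim exE conjE) (rule that)
  from ex obtain v where v: "v \<in> t" "u v \<noteq> 0" by (elim bexE) (rule that)
  from v t obtain w where vw: "v = mon w" by blast
  have e1: "(\<Sum>x\<in>t. cscale (u x) x) w = 0" using t(3) by (simp add: zero_fun_def)
  have e2: "(\<Sum>x\<in>t. cscale (u x) x) w = (\<Sum>x\<in>t. u x * x w)"
    using t(1) unfolding cscale_def by (rule sum_fun_apply)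
  have e3: "(\<Sum>x\<in>t. u x * x w) = u v * v w + (\<Sum>x\<in>t - {v}. u x * x w)"
    using t(1) v(1) by (rule sum.remove)
  have e4: "(\<Sum>x\<in>t - {v}. u x * x w) = 0"
  proof (rule sum.neutral, rule ballI)
    fix x assume x: "x \<in> t - {v}"
    then obtain w' where "x = mon w'" using t(2) by blast
    with x vw have "x = mon w'" "w' \<noteq> w" by auto
    then show "u x * x w = 0" by (simp add: mon_app)
  qed
  have "v w = 1" using vw by (simp add: mon_app)
  with e1 e2 e3 e4 have "u v = 0" by simp
  with v(2) show False by simp
qed

lemma dim_mon: "finite S \<Longrightarrow> vector_space.dim cscale (module.span cscale (mon ` S)) = card S"
proof -
  assume "finite S"
  interpret vector_space cscale by (rule vector_space_cscale)
  have "dim (span (mon ` S)) = card (mon ` S)"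
    by (rule dim_span_eq_card_independent) (rule indep_mon)
  also have "\<dots> = card S" using mon_inj by (simp add: card_image inj_on_def inj_def)
  finally show ?thesis .
qed

definition bad :: "nat list \<Rightarrow> bool" where
  "bad w = (\<exists>u r v. r \<in> rels \<and> w = u @ r @ v)"

lemma rels_letters: "r \<in> rels \<Longrightarrow> set r \<subseteq> letters"
  by (auto simp: rels_def letters_def)

lemma finite_words: "finite (words n)"
proof -
  have "words n = {xs. set xs \<subseteq> letters \<and> length xs = n}" by (auto simp: words_def)
  then show ?thesis using finite_lists_length_eq[of letters n] by (simp add: letters_def)
qed

lemma ideal_eq: "ideal_deg n = module.span cscale (mon ` {w \<in> words n. bad w})"
proof -
  have "{mon (u @ r @ v) | u r v. r \<in> rels \<and> set u \<subseteq> letters \<and> set v \<subseteq> letters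
                              \<and> length (u @ r @ v) = n} = mon ` {w \<in> words n. bad w}"
  proof (rule set_eqI, rule iffI)
    fix x assume "x \<in> {mon (u @ r @ v) | u r v. r \<in> rels \<and> set u \<subseteq> letters \<and> set v \<subseteq> letters
                              \<and> length (u @ r @ v) = n}"
    then obtain u r v where h: "x = mon (u @ r @ v)" "r \<in> rels" "set u \<subseteq> letters" "set v \<subseteq> letters"
      "length (u @ r @ v) = n" by blast
    have "u @ r @ v \<in> {w \<in> words n. bad w}"
      using h rels_letters[OF h(2)] unfolding words_def bad_def by auto
    then show "x \<in> mon ` {w \<in> words n. bad w}" using h(1) by blast
  next
    fix x assume "x \<in> mon ` {w \<in> words n. bad w}"
    then obtain w where w: "x = mon w" "w \<in> words n" "bad w" by blast
    then obtain u r v where h: "r \<in> rels" "w = u @ r @ v" unfolding bad_def by blast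
    have "set u \<subseteq> letters" "set v \<subseteq> letters" "length (u @ r @ v) = n"
      using w(2) h(2) unfolding words_def by auto
    then show "x \<in> {mon (u @ r @ v) | u r v. r \<in> rels \<and> set u \<subseteq> letters \<and> set v \<subseteq> letters
                              \<and> length (u @ r @ v) = n}" using h w(1) by blast
  qed
  then show ?thesis by (simp add: ideal_deg_def)
qed

definition G :: "nat \<Rightarrow> nat list set" where
  "G n = {w \<in> words n. \<not> bad w}"

lemma a_dim_G: "a_dim n = card (G n)"
proof -
  have "a_dim n = card (words n) - card {w \<in> words n. bad w}"
    unfolding a_dim_def free_deg_def ideal_eq
    using finite_words by (simp add: dim_mon)
  also have "\<dots> = card (words n - {w \<in> words n. bad w})"
    using finite_words by (subst card_Diff_subset) auto
  also have "words n - {w \<in> words n. bad w} = G n" by (auto simp: G_def)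
  finally show ?thesis .
qed


fun ok :: "nat list \<Rightarrow> bool" where
  "ok [] = True"
| "ok [a] = (a \<in> letters)"
| "ok (a # b # w) = (a \<in> letters \<and> [a,b] \<notin> rels \<and> take 3 (a#b#w) \<notin> rels \<and> ok (b#w))"

lemma rels_len: "r \<in> rels \<Longrightarrow> length r = 2 \<or> length r = 3"
  by (auto simp: rels_def)

lemma prefix_rel: "(\<exists>r v. r \<in> rels \<and> x = r @ v) \<longleftrightarrow> (take 2 x \<in> rels \<or> take 3 x \<in> rels)"
proof
  assume "\<exists>r v. r \<in> rels \<and> x = r @ v"
  then obtain r v where h: "r \<in> rels" "x = r @ v" by blast
  then have "take (length r) x = r" by simp
  then show "take 2 x \<in> rels \<or> take 3 x \<in> rels" using rels_len[OF h(1)] h(1) by auto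
next
  assume "take 2 x \<in> rels \<or> take 3 x \<in> rels"
  then show "\<exists>r v. r \<in> rels \<and> x = r @ v"
  proof
    assume "take 2 x \<in> rels"
    moreover have "x = take 2 x @ drop 2 x" by simp
    ultimately show ?thesis by blast
  next
    assume "take 3 x \<in> rels"
    moreover have "x = take 3 x @ drop 3 x" by simp
    ultimately show ?thesis by blast
  qed
qed

lemma bad_cons: "bad (a # w) \<longleftrightarrow> (\<exists>r v. r \<in> rels \<and> a # w = r @ v) \<or> bad w"
proof
  assume "bad (a # w)"
  then obtain u r v where h: "r \<in> rels" "a # w = u @ r @ v" unfolding bad_def by blast
  show "(\<exists>r v. r \<in> rels \<and> a # w = r @ v) \<or> bad w"
  proof (cases u)
    case Nil then show ?thesis using h by auto
  next
    case (Cons c u')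
    then have "w = u' @ r @ v" using h by simp
    then show ?thesis using h unfolding bad_def by blast
  qed
next
  assume "(\<exists>r v. r \<in> rels \<and> a # w = r @ v) \<or> bad w"
  then show "bad (a # w)"
  proof
    assume "\<exists>r v. r \<in> rels \<and> a # w = r @ v"
    then obtain r v where "r \<in> rels" "a # w = [] @ r @ v" by auto
    then show ?thesis unfolding bad_def by blast
  next
    assume "bad w"
    then obtain u r v where "r \<in> rels" "w = u @ r @ v" unfolding bad_def by blast
    then have "r \<in> rels" "a # w = (a # u) @ r @ v" by auto
    then show ?thesis unfolding bad_def by blast
  qed
qed

lemma bad_short: "\<not> bad []" "\<not> bad [a]"
  unfolding bad_def by (auto simp: rels_def Cons_eq_append_conv append_eq_Cons_conv)

lemma ok_iff: "ok w \<longleftrightarrow> set w \<subseteq> letters \<and> \<not> bad w"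
proof (induction w rule: ok.induct)
  case 1 then show ?case using bad_short by simp
next
  case (2 a) then show ?case using bad_short by simp
next
  case (3 a b w)
  have "bad (a # b # w) \<longleftrightarrow> take 2 (a#b#w) \<in> rels \<or> take 3 (a#b#w) \<in> rels \<or> bad (b # w)"
    using bad_cons[of a "b#w"] prefix_rel[of "a#b#w"] by blast
  then show ?case using 3 by auto
qed

lemma G_ok: "G n = {w. length w = n \<and> ok w}"
  by (auto simp: G_def words_def ok_iff)

lemma ok_letters: "ok w \<Longrightarrow> x \<in> set w \<Longrightarrow> x < 3"
  using ok_iff[of w] by (auto simp: letters_def)

lemma ok_tl: "ok (a # w) \<Longrightarrow> ok w"
  by (cases w) auto

definition ff :: "nat list \<Rightarrow> nat list" where "ff w = ((hd w + 1) mod 3) # w"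
definition gg :: "nat list \<Rightarrow> nat list" where "gg v = hd v # ((hd v + 1) mod 3) # v"

lemma three_cases: "(x::nat) < 3 \<Longrightarrow> x = 0 \<or> x = 1 \<or> x = 2" by auto

lemma rels_mem: "[x,y] \<in> rels \<longleftrightarrow> x = y \<and> x < 3"
  "[x,y,z] \<in> rels \<longleftrightarrow> (x = 0 \<and> y = 1 \<and> z = 2) \<or> (x = 1 \<and> y = 2 \<and> z = 0) \<or> (x = 2 \<and> y = 0 \<and> z = 1)"
  by (auto simp: rels_def)

lemma letters_iff: "a \<in> letters \<longleftrightarrow> a < 3"
  by (auto simp: letters_def)

lemma ok_cons2: "ok (a # b # w) \<longleftrightarrow> a < 3 \<and> a \<noteq> b \<and> (\<forall>c w'. w = c # w' \<longrightarrow> [a,b,c] \<notin> rels) \<and> ok (b # w)"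
proof (cases w)
  case Nil
  have "ok (a # b # w) \<longleftrightarrow> a \<in> letters \<and> [a,b] \<notin> rels \<and> take 3 (a#b#w) \<notin> rels \<and> ok (b#w)"
    by (rule ok.simps(3))
  moreover have "take 3 (a#b#w) = [a,b]" using Nil by simp
  moreover have "(\<forall>c w'. w = c # w' \<longrightarrow> [a,b,c] \<notin> rels)" using Nil by simp
  ultimately show ?thesis using Nil by (auto simp: letters_iff rels_mem(1))
next
  case (Cons c w')
  have "ok (a # b # w) \<longleftrightarrow> a \<in> letters \<and> [a,b] \<notin> rels \<and> take 3 (a#b#w) \<notin> rels \<and> ok (b#w)"
    by (rule ok.simps(3))
  moreover have "take 3 (a#b#w) = [a,b,c]" using Cons by simp
  ultimately have f: "ok (a # b # w) \<longleftrightarrow> a < 3 \<and> a \<noteq> b \<and> [a,b,c] \<notin> rels \<and> ok (b#w)"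
    unfolding letters_iff rels_mem(1) by auto
  have g: "(\<forall>c' w''. w = c' # w'' \<longrightarrow> [a,b,c'] \<notin> rels) \<longleftrightarrow> [a,b,c] \<notin> rels" using Cons by simp
  show ?thesis unfolding f g ..
qed

lemma ff_ok: assumes "ok (b # w)" shows "ok (ff (b # w))"
proof -
  have b: "b < 3" using ok_letters[OF assms] by simp
  have "(b + 1) mod 3 < 3" by simp
  moreover have "(b + 1) mod 3 \<noteq> b" using three_cases[OF b] by auto
  moreover have "[(b + 1) mod 3, b, c] \<notin> rels" for c
    using three_cases[OF b] by (auto simp: rels_mem)
  ultimately show ?thesis unfolding ff_def ok_cons2 using assms by simp
qed

lemma gg_ok: assumes "ok (c # w)" shows "ok (gg (c # w))"
proof -
  have c: "c < 3" using ok_letters[OF assms] by simp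
  have "ok (((c + 1) mod 3) # c # w)" using ff_ok[OF assms] by (simp add: ff_def)
  moreover have "(c + 1) mod 3 \<noteq> c" using three_cases[OF c] by auto
  moreover have "[c, (c + 1) mod 3, c] \<notin> rels"
    using three_cases[OF c] by (auto simp: rels_mem)
  ultimately show ?thesis unfolding gg_def ok_cons2 using c by simp
qed

lemma decomp:
  assumes "ok (a # b # c # w)"
  shows "(a # b # c # w = ff (b # c # w)) \<or> (a # b # c # w = gg (c # w))"
proof -
  have abc: "a < 3" "b < 3" "c < 3" using ok_letters[OF assms] by auto
  have r: "[a,b] \<notin> rels" "[a,b,c] \<notin> rels" "[b,c] \<notin> rels" using assms by auto
  show ?thesis using three_cases[OF abc(1)] three_cases[OF abc(2)] three_cases[OF abc(3)] r
    by (auto simp: ff_def gg_def rels_def)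
qed

lemma G_split:
  assumes "m \<ge> 3"
  shows "G m = ff ` G (m - 1) \<union> gg ` G (m - 2)"
proof (rule set_eqI, rule iffI)
  fix x assume "x \<in> G m"
  then have x: "length x = m" "ok x" by (auto simp: G_ok)
  obtain a x1 where x1: "x = a # x1" using x(1) assms by (cases x) auto
  obtain b x2 where x2: "x1 = b # x2" using x(1) assms x1 by (cases x1) auto
  obtain c w where x3: "x2 = c # w" using x(1) assms x1 x2 by (cases x2) auto
  have xw: "x = a # b # c # w" using x1 x2 x3 by simp
  have o1: "ok (b # c # w)" "ok (c # w)" using x(2) xw ok_tl by blast+
  have l: "length (b # c # w) = m - 1" "length (c # w) = m - 2" using x(1) xw by auto
  show "x \<in> ff ` G (m - 1) \<union> gg ` G (m - 2)"
    using decomp[of a b c w] x(2) xw o1 l unfolding G_ok by blast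
next
  fix x assume "x \<in> ff ` G (m - 1) \<union> gg ` G (m - 2)"
  then show "x \<in> G m"
  proof
    assume "x \<in> ff ` G (m - 1)"
    then obtain w where w: "x = ff w" "length w = m - 1" "ok w" by (auto simp: G_ok)
    then obtain b w' where "w = b # w'" using assms by (cases w) auto
    then show ?thesis using w ff_ok[of b w'] assms by (auto simp: G_ok ff_def)
  next
    assume "x \<in> gg ` G (m - 2)"
    then obtain w where w: "x = gg w" "length w = m - 2" "ok w" by (auto simp: G_ok)
    then obtain b w' where "w = b # w'" using assms by (cases w) auto
    then show ?thesis using w gg_ok[of b w'] assms by (auto simp: G_ok gg_def)
  qed
qed

lemma finite_G: "finite (G n)"
  using finite_words by (simp add: G_def)

lemma G_rec:
  assumes "m \<ge> 3"
  shows "card (G m) = card (G (m - 1)) + card (G (m - 2))"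
proof -
  have inj1: "inj_on ff (G (m - 1))" unfolding inj_on_def ff_def by auto
  have inj2: "inj_on gg (G (m - 2))" unfolding inj_on_def gg_def by auto
  have disj: "ff ` G (m - 1) \<inter> gg ` G (m - 2) = {}"
  proof (rule ccontr)
    assume "ff ` G (m - 1) \<inter> gg ` G (m - 2) \<noteq> {}"
    then obtain w v where wv: "w \<in> G (m - 1)" "v \<in> G (m - 2)" "ff w = gg v" by blast
    have "w \<noteq> []" "v \<noteq> []" using wv(1,2) assms by (auto simp: G_ok)
    then have "hd w < 3" "hd v < 3" using wv(1,2) ok_letters by (auto simp: G_ok)
    moreover have "(hd w + 1) mod 3 = hd v" "hd w = (hd v + 1) mod 3" using wv(3) by (auto simp: ff_def gg_def)
    ultimately show False using three_cases[of "hd v"] by auto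
  qed
  have "card (G m) = card (ff ` G (m - 1)) + card (gg ` G (m - 2))"
    unfolding G_split[OF assms] using finite_G disj by (simp add: card_Un_disjoint)
  also have "\<dots> = card (G (m - 1)) + card (G (m - 2))"
    using inj1 inj2 by (simp add: card_image)
  finally show ?thesis .
qed

theorem mainTheorem20:
  fixes n :: nat
  assumes "n \<ge> 4"
  shows "int (a_dim n) = 2 * int (a_dim (n - 1)) - int (a_dim (n - 3))"
proof -
  have h1: "card (G n) = card (G (n - 1)) + card (G (n - 2))" using assms G_rec by simp
  have h2: "card (G (n - 1)) = card (G (n - 2)) + card (G (n - 3))"
    using assms G_rec[of "n - 1"] by (simp add: numeral_eq_Suc)
  show ?thesis unfolding a_dim_G using h1 h2 by simp
qed

end
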